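(* Let $\alpha\in\bar C$ and let $\zeta\in\alpha+\mathbb Z$ be such that $\ell_0\ell_r$ has no roots in $Z:=\{\eta\in\alpha+\mathbb Z\mid \eta<\zeta\}$. Then $\{1,S,\ldots,S^{r-1}\}$ is a local integral basis of $A$ at $Z\cup\{\zeta\}$.
   Context: Let $C$ be a field of characteristic zero and $\bar C$ its algebraic closure. Let $\sigma$ be the automorphism of $C(x)$ with $\sigma(f)(x)=f(x+1)$, and $C(x)[S]$ the Ore algebra with $Sf=\sigma(f)S$ for $f\in C(x)$; put $\Delta=S-1$. Fix $L=\ell_0+\ell_1S+\cdots+\ell_rS^r\in C[x][S]$ with $\ell_0\ell_r\neq0$, and let $A=C(x)[S]/C(x)[S]L$ (a left $C(x)[S]$-module); every element of $A$ is uniquely $f_0+f_1S+\cdots+f_{r-1}S^{r-1}$ with $f_i\in C(x)$. For $\alpha\in\bar C$, an operator $P=\sum_i p_iS^i\in C(x)[S]$ acts on sequences $b:\alpha+\mathbb Z\to\bar C((q))$ ($q$ a new indeterminate) by $(P\cdot b)(z)=\sum_i p_i(z+q)\,b(z+i)$. $\operatorname{Sol}_\alpha(L)$ is the set of such $b$ with $L\cdot b=0$ (an $r$-dimensional $\bar C((q))$-vector space); an element $f\in A$ acts on $b\in\operatorname{Sol}_\alpha(L)$ via any representative. For $a\in\bar C((q))$, $\nu_q(a)$ is the smallest exponent with nonzero coefficient ($\nu_q(0)=+\infty$). The value function is $\operatorname{val}_\alpha(f)=\min_{b\in\operatorname{Sol}_\alpha(L)}\big(\nu_q((f\cdot b)(\alpha))-\liminf_{n\to\infty}\nu_q(b(\alpha-n))\big)$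 (with $\infty-\infty=\infty$). $f$ is (locally) integral at $\alpha$ if $\operatorname{val}_\alpha(f)\ge0$. Let $C(x)_\alpha=\{p/q: p,q\in C[x],\ q(\alpha)\ne0\}$; the integral elements at $\alpha$ form a $C(x)_\alpha$-module $\mathcal O_\alpha$, and a basis of this module is a local integral basis at $\alpha$. For $Z\subseteq\bar C$, a basis of $A$ is a local integral basis at $Z$ if it is one at every $\alpha\in Z$. On $\alpha+\mathbb Z$ we write $\beta<\gamma$ if $\beta-\gamma$ is a negative integer. *)

theory Defs
  imports "HOL-Computational_Algebra.Computational_Algebra"
          "HOL-Library.Extended_Real"
begin

text \<open>The algebraic closure of C is modelled as the ambient type 'a (a field of
characteristic zero which is algebraically closed and algebraic over the subfield C).
C(x) is modelled as the fraction field 'a poly fract, restricted to those fractions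
whose numerator and denominator can be chosen with coefficients in C.\<close>

definition is_subfield :: "'a::field set \<Rightarrow> bool" where
  "is_subfield C \<longleftrightarrow> 0 \<in> C \<and> 1 \<in> C \<and> (\<forall>a\<in>C. \<forall>b\<in>C. a + b \<in> C \<and> a * b \<in> C)
     \<and> (\<forall>a\<in>C. - a \<in> C \<and> inverse a \<in> C)"

definition alg_closed_type :: "'a::field itself \<Rightarrow> bool" where
  "alg_closed_type _ \<longleftrightarrow> (\<forall>p::'a poly. degree p \<ge> 1 \<longrightarrow> (\<exists>x. poly p x = 0))"

definition polyC :: "'a::field set \<Rightarrow> 'a poly \<Rightarrow> bool" where
  "polyC C p \<longleftrightarrow> set (coeffs p) \<subseteq> C"

definition algebraic_over :: "'a::field set \<Rightarrow> bool" where
  "algebraic_over C \<longleftrightarrow> (\<forall>x::'a. \<exists>p. p \<noteq> 0 \<and> polyC C p \<and> poly p x = 0)"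

definition ratfunC :: "'a::field set \<Rightarrow> 'a poly fract \<Rightarrow> bool" where
  "ratfunC C f \<longleftrightarrow> (\<exists>n d. polyC C n \<and> polyC C d \<and> d \<noteq> 0 \<and> f = Fract n d)"

definition local_ratfun :: "'a::field set \<Rightarrow> 'a \<Rightarrow> 'a poly fract \<Rightarrow> bool" where
  "local_ratfun C \<alpha> f \<longleftrightarrow> (\<exists>n d. polyC C n \<and> polyC C d \<and> poly d \<alpha> \<noteq> 0 \<and> f = Fract n d)"

text \<open>Evaluation at z + q, as Laurent series in q.\<close>
definition pev :: "'a::field poly \<Rightarrow> 'a \<Rightarrow> 'a fls" where
  "pev p z = poly (map_poly fls_const p) (fls_const z + fls_X)"

definition rev_at :: "'a::field_char_0 poly fract \<Rightarrow> 'a \<Rightarrow> 'a fls" where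
  "rev_at f z = (THE v. \<forall>n d. d \<noteq> 0 \<longrightarrow> f = Fract n d \<longrightarrow> v = pev n z / pev d z)"

text \<open>Sequences b : alpha + Z \<rightarrow> Cbar((q)) are modelled as b :: int \<Rightarrow> 'a fls,
 with b n standing for b(alpha + n). Operator L given by coefficients l 0, ..., l r.\<close>
definition is_sol :: "(nat \<Rightarrow> 'a::field poly) \<Rightarrow> nat \<Rightarrow> 'a \<Rightarrow> (int \<Rightarrow> 'a fls) \<Rightarrow> bool" where
  "is_sol l r \<alpha> b \<longleftrightarrow> (\<forall>n::int. (\<Sum>i\<le>r. pev (l i) (\<alpha> + of_int n) * b (n + int i)) = 0)"

definition nu_q :: "'a::field fls \<Rightarrow> ereal" where
  "nu_q a = (if a = 0 then \<infinity> else ereal (of_int (fls_subdegree a)))"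

text \<open>(f . b)(alpha) for f = f_0 + f_1 S + ... + f_(r-1) S^(r-1).\<close>
definition act_at :: "nat \<Rightarrow> (nat \<Rightarrow> 'a::field_char_0 poly fract) \<Rightarrow> 'a \<Rightarrow> (int \<Rightarrow> 'a fls) \<Rightarrow> 'a fls" where
  "act_at r f \<alpha> b = (\<Sum>i<r. rev_at (f i) \<alpha> * b (int i))"

definition ediff :: "ereal \<Rightarrow> ereal \<Rightarrow> ereal" where
  "ediff a c = (if a = \<infinity> then \<infinity> else a - c)"

definition val_at :: "(nat \<Rightarrow> 'a::field_char_0 poly) \<Rightarrow> nat \<Rightarrow> 'a \<Rightarrow> (nat \<Rightarrow> 'a poly fract) \<Rightarrow> ereal" where
  "val_at l r \<alpha> f = (INF b \<in> {b. is_sol l r \<alpha> b}.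
      ediff (nu_q (act_at r f \<alpha> b)) (liminf (\<lambda>n::nat. nu_q (b (- int n)))))"

text \<open>Elements of A, in canonical form (coefficients f 0, ..., f (r-1)).\<close>
definition A_elem :: "'a::field set \<Rightarrow> nat \<Rightarrow> (nat \<Rightarrow> 'a poly fract) \<Rightarrow> bool" where
  "A_elem C r f \<longleftrightarrow> (\<forall>i. ratfunC C (f i)) \<and> (\<forall>i\<ge>r. f i = 0)"

definition integral_elems :: "'a::field_char_0 set \<Rightarrow> (nat \<Rightarrow> 'a poly) \<Rightarrow> nat \<Rightarrow> 'a \<Rightarrow> (nat \<Rightarrow> 'a poly fract) set" where
  "integral_elems C l r \<alpha> = {f. A_elem C r f \<and> val_at l r \<alpha> f \<ge> 0}"

definition local_integral_basis ::
  "'a::field_char_0 set \<Rightarrow> (nat \<Rightarrow> 'a poly) \<Rightarrow> nat \<Rightarrow> 'a \<Rightarrow> (nat \<Rightarrow> nat \<Rightarrow> 'a poly fract) \<Rightarrow> nat \<Rightarrow> bool" where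
  "local_integral_basis C l r \<alpha> B m \<longleftrightarrow>
     (\<forall>j<m. B j \<in> integral_elems C l r \<alpha>) \<and>
     (\<forall>f\<in>integral_elems C l r \<alpha>. \<exists>!c. (\<forall>j<m. local_ratfun C \<alpha> (c j)) \<and> (\<forall>j\<ge>m. c j = 0) \<and>
         f = (\<lambda>i. \<Sum>j<m. c j * B j i))"

definition S_pow :: "nat \<Rightarrow> nat \<Rightarrow> 'a::field poly fract" where
  "S_pow j = (\<lambda>i. if i = j then 1 else 0)"

definition shift_less :: "'a::field \<Rightarrow> 'a \<Rightarrow> bool" where
  "shift_less \<beta> \<gamma> \<longleftrightarrow> (\<exists>n::nat. n > 0 \<and> \<beta> - \<gamma> = - of_nat n)"

end

theory Submission
  imports Defs
begin


lemma pev_alt: "pev p z = fps_to_fls (fps_of_poly (pcompose p [:z,1:]))"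
proof (induction p rule: pCons_induct)
  case 0 then show ?case by (simp add: pev_def)
next
  case (pCons a p)
  have "pev (pCons a p) z = fls_const a + (fls_const z + fls_X) * pev p z"
    using pCons by (simp add: pev_def map_poly_pCons)
  also have "\<dots> = fps_to_fls (fps_of_poly (pcompose (pCons a p) [:z,1:]))"
    by (simp add: pCons.IH pcompose_pCons fps_of_poly_simps fls_times_fps_to_fls fps_of_poly_pCons algebra_simps)
  finally show ?case .
qed

lemma pev_mult: "pev (p*q) z = pev p z * pev q z"
  by (simp add: pev_alt pcompose_mult fps_of_poly_mult fls_times_fps_to_fls)
lemma pev_1[simp]: "pev 1 z = 1" by (simp add: pev_def)
lemma pev_0[simp]: "pev 0 z = 0" by (simp add: pev_def)

lemma pev_nz: "p \<noteq> 0 \<Longrightarrow> pev p z \<noteq> 0"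
  by (simp add: pev_alt fps_of_poly_eq_iff[of _ 0, simplified] pcompose_eq_0_iff)

definition ordz :: "'a::field \<Rightarrow> 'a poly \<Rightarrow> nat" where
  "ordz z p = order 0 (pcompose p [:z,1:])"

lemma nu_pev: "p \<noteq> 0 \<Longrightarrow> nu_q (pev p z) = ereal (of_nat (ordz z p))"
  using pev_nz[of p z]
  by (simp add: nu_q_def pev_alt fls_subdegree_fls_to_fps subdegree_fps_of_poly pcompose_eq_0_iff ordz_def
      fps_of_poly_eq_iff[of _ 0, simplified])

lemma ordz_mult: "p \<noteq> 0 \<Longrightarrow> q \<noteq> 0 \<Longrightarrow> ordz z (p*q) = ordz z p + ordz z q"
  by (simp add: ordz_def pcompose_mult order_mult pcompose_eq_0_iff)

lemma ordz_0: "poly p z \<noteq> 0 \<Longrightarrow> ordz z p = 0"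
  by (simp add: ordz_def order_0I poly_pcompose)

lemma ordz_pos: "p \<noteq> 0 \<Longrightarrow> poly p z = 0 \<Longrightarrow> ordz z p > 0"
proof -
  assume a: "p \<noteq> 0" "poly p z = 0"
  have "pcompose p [:z,1:] \<noteq> 0" using a by (simp add: pcompose_eq_0_iff)
  moreover have "poly (pcompose p [:z,1:]) 0 = 0" using a by (simp add: poly_pcompose)
  ultimately show ?thesis unfolding ordz_def using order_root by blast
qed

lemma nu_mult: "nu_q (a*b) = nu_q a + nu_q (b::'a::field fls)"
  by (cases "a = 0"; cases "b = 0") (auto simp: nu_q_def)

lemma nu_uminus[simp]: "nu_q (- a) = nu_q (a::'a::field fls)"
  by (simp add: nu_q_def)

lemma nu_add_gt: "nu_q a > c \<Longrightarrow> nu_q b > c \<Longrightarrow> nu_q (a+b) > (c::ereal)"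
proof -
  assume h: "nu_q a > c" "nu_q b > c"
  show ?thesis
  proof (cases "a = 0 \<or> b = 0 \<or> a + b = 0")
    case True then show ?thesis using h by (auto simp: nu_q_def)
  next
    case False
    then have "fls_subdegree (a+b) \<ge> min (fls_subdegree a) (fls_subdegree b)"
      by (simp add: fls_plus_subdegree)
    then have "nu_q (a+b) \<ge> min (nu_q a) (nu_q b)" using False by (auto simp: nu_q_def min_def)
    then show ?thesis using h by (auto simp: min_def split: if_splits)
  qed
qed

lemma nu_sum_gt: "finite I \<Longrightarrow> I \<noteq> {} \<Longrightarrow> (\<And>i. i \<in> I \<Longrightarrow> nu_q (f i) > c) \<Longrightarrow> nu_q (\<Sum>i\<in>I. f i :: 'a::field fls) > (c::ereal)"
proof (induction I rule: finite_ne_induct)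
  case (singleton x) then show ?case by simp
next
  case (insert x F) then show ?case by (simp add: nu_add_gt)
qed

lemma nu_add_ge: "nu_q a \<ge> c \<Longrightarrow> nu_q b \<ge> c \<Longrightarrow> nu_q (a+b) \<ge> (c::ereal)"
proof -
  assume h: "nu_q a \<ge> c" "nu_q b \<ge> c"
  show ?thesis
  proof (cases "a = 0 \<or> b = 0 \<or> a + b = 0")
    case True then show ?thesis using h by (auto simp: nu_q_def)
  next
    case False
    then have "fls_subdegree (a+b) \<ge> min (fls_subdegree a) (fls_subdegree b)"
      by (simp add: fls_plus_subdegree)
    then have "nu_q (a+b) \<ge> min (nu_q a) (nu_q b)" using False by (auto simp: nu_q_def min_def)
    then show ?thesis using h by (auto simp: min_def split: if_splits)
  qed
qed

lemma nu_sum_ge: "finite I \<Longrightarrow> (\<And>i. i \<in> I \<Longrightarrow> nu_q (f i) \<ge> c) \<Longrightarrow> nu_q (\<Sum>i\<in>I. f i :: 'a::field fls) \<ge> (c::ereal)"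
proof (induction I rule: finite_induct)
  case empty then show ?case by (simp add: nu_q_def)
next
  case (insert x F) then show ?case by (simp add: nu_add_ge)
qed

lemma nu_divide: "b \<noteq> 0 \<Longrightarrow> nu_q (a / b) = nu_q a - nu_q (b::'a::field fls)"
  by (cases "a = 0") (auto simp: nu_q_def fls_divide_subdegree)

lemma rev_at_Fract: "d \<noteq> 0 \<Longrightarrow> rev_at (Fract n d) z = pev n z / pev d z"
  unfolding rev_at_def
proof (rule the_equality)
  assume d: "d \<noteq> 0"
  show "\<forall>n' d'. d' \<noteq> 0 \<longrightarrow> Fract n d = Fract n' d' \<longrightarrow> pev n z / pev d z = pev n' z / pev d' z"
  proof (intro allI impI)
    fix n' d' assume d': "d' \<noteq> 0" and e: "Fract n d = Fract n' d'"
    have "n * d' = n' * d" using e d d' by (simp add: eq_fract)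
    then have "pev n z * pev d' z = pev n' z * pev d z" by (metis pev_mult)
    then show "pev n z / pev d z = pev n' z / pev d' z"
      using pev_nz[OF d, of z] pev_nz[OF d', of z] by (simp add: field_simps)
  qed
  fix v assume "\<forall>n' d'. d' \<noteq> 0 \<longrightarrow> Fract n d = Fract n' d' \<longrightarrow> v = pev n' z / pev d' z"
  then show "v = pev n z / pev d z" using d by blast
qed

lemma rev_at_1[simp]: "rev_at 1 z = 1"
  by (simp add: One_fract_def rev_at_Fract)
lemma rev_at_0[simp]: "rev_at 0 z = 0"
  by (simp add: Zero_fract_def rev_at_Fract)



lemma polyC_iff: "0 \<in> C \<Longrightarrow> polyC C p \<longleftrightarrow> (\<forall>n. coeff p n \<in> C)"
  unfolding polyC_def using forall_coeffs_conv[of "\<lambda>x. x \<in> C" p] by auto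

context
  fixes C :: "'a::field_char_0 set"
  assumes sf: "is_subfield C"
begin

lemma C0: "0 \<in> C" and C1: "1 \<in> C" and Cadd: "a \<in> C \<Longrightarrow> b \<in> C \<Longrightarrow> a + b \<in> C"
  and Cmult: "a \<in> C \<Longrightarrow> b \<in> C \<Longrightarrow> a * b \<in> C" and Cuminus: "a \<in> C \<Longrightarrow> - a \<in> C"
  and Cinv: "a \<in> C \<Longrightarrow> inverse a \<in> C"
  using sf by (auto simp: is_subfield_def)

lemma Cdiv: "a \<in> C \<Longrightarrow> b \<in> C \<Longrightarrow> a / b \<in> C"
  by (simp add: divide_inverse Cmult Cinv)

lemma Cdiff: "a \<in> C \<Longrightarrow> b \<in> C \<Longrightarrow> a - b \<in> C"
  using Cadd[OF _ Cuminus] by (simp)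

lemma Csum: "(\<And>i. i \<in> I \<Longrightarrow> f i \<in> C) \<Longrightarrow> sum f I \<in> C"
proof (induction I rule: infinite_finite_induct)
  case (infinite A) then show ?case by (simp add: C0)
next
  case empty then show ?case by (simp add: C0)
next
  case (insert x F) then show ?case by (simp add: Cadd)
qed

lemma pC0: "polyC C 0" by (simp add: polyC_iff C0)
lemma pC1: "polyC C 1" by (simp add: polyC_iff C0 C1 coeff_1)

lemma pCadd: "polyC C p \<Longrightarrow> polyC C q \<Longrightarrow> polyC C (p + q)"
  by (simp add: polyC_iff C0 Cadd)
lemma pCdiff: "polyC C p \<Longrightarrow> polyC C q \<Longrightarrow> polyC C (p - q)"
  by (simp add: polyC_iff C0 Cdiff)
lemma pCmult: "polyC C p \<Longrightarrow> polyC C q \<Longrightarrow> polyC C (p * q)"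
  by (simp add: polyC_iff C0 coeff_mult Csum Cmult)
lemma pCmonom: "c \<in> C \<Longrightarrow> polyC C (monom c k)"
  by (simp add: polyC_iff C0 coeff_monom)

lemma div_exists:
  assumes q: "q \<noteq> 0" "polyC C q"
  shows "polyC C p \<Longrightarrow> \<exists>s t. polyC C s \<and> polyC C t \<and> p = q * s + t \<and> (t = 0 \<or> degree t < degree q)"
proof (induction "degree p" arbitrary: p rule: less_induct)
  case less
  show ?case
  proof (cases "p = 0 \<or> degree p < degree q")
    case True
    then show ?thesis using less.prems by (intro exI[of _ 0] exI[of _ p]) (auto simp: pC0)
  next
    case False
    then have pn: "p \<noteq> 0" and dg: "degree q \<le> degree p" by auto
    define c where "c = lead_coeff p / lead_coeff q"
    define k where "k = degree p - degree q"
    define p' where "p' = p - monom c k * q"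
    have cC: "c \<in> C" unfolding c_def
      using less.prems q by (simp add: polyC_iff C0 Cdiv)
    have p'C: "polyC C p'" unfolding p'_def using less.prems q cC by (simp add: pCdiff pCmult pCmonom)
    have dmq: "degree (monom c k * q) \<le> degree p"
      using degree_mult_le[of "monom c k" q] degree_monom_le[of c k] dg unfolding k_def by linarith
    have dp': "degree p' \<le> degree p" unfolding p'_def
      using degree_diff_le[OF order.refl dmq] by simp
    have cf: "coeff p' (degree p) = 0"
    proof -
      have "coeff (monom c k * q) (degree p) = c * lead_coeff q"
        using dg unfolding k_def by (simp add: coeff_monom_mult)
      then show ?thesis unfolding p'_def c_def using q by simp
    qed
    show ?thesis
    proof (cases "p' = 0")
      case True
      then have "p = q * monom c k + 0" unfolding p'_def by (simp add: mult.commute)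
      then show ?thesis using cC by (intro exI[of _ "monom c k"] exI[of _ 0]) (auto simp: pCmonom pC0)
    next
      case False
      have "degree p' \<noteq> degree p" using cf False leading_coeff_0_iff by metis
      then have "degree p' < degree p" using dp' by simp
      from less.hyps[OF this p'C] obtain s t where st: "polyC C s" "polyC C t" "p' = q * s + t"
        "t = 0 \<or> degree t < degree q" by blast
      have "p = q * (s + monom c k) + t" using st(3) unfolding p'_def by (simp add: algebra_simps)
      then show ?thesis using st cC by (intro exI[of _ "s + monom c k"] exI[of _ t]) (auto simp: pCadd pCmonom)
    qed
  qed
qed


lemma min_root_dvd:
  assumes p: "p \<noteq> 0" "polyC C p" "poly p z = 0"
    and pmin: "\<And>p'. p' \<noteq> 0 \<Longrightarrow> polyC C p' \<Longrightarrow> poly p' z = 0 \<Longrightarrow> degree p \<le> degree p'"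
    and n: "polyC C n" "poly n z = 0"
  shows "\<exists>s. polyC C s \<and> n = p * s"
proof -
  obtain s t where st: "polyC C s" "polyC C t" "n = p * s + t" "t = 0 \<or> degree t < degree p"
    using div_exists[OF p(1,2) n(1)] by blast
  have "poly t z = 0" using st(3) n(2) p(3) by (metis add_0 mult_zero_left poly_add poly_mult)
  then have "t = 0" using st(4) pmin[of t] st(2) by fastforce
  then show ?thesis using st by auto
qed

lemma LR:
  shows "polyC C n \<Longrightarrow> polyC C d \<Longrightarrow> d \<noteq> 0 \<Longrightarrow> n \<noteq> 0 \<Longrightarrow> ordz z d \<le> ordz z n \<Longrightarrow>
    \<exists>n' d'. polyC C n' \<and> polyC C d' \<and> poly d' z \<noteq> 0 \<and> Fract n d = Fract n' d'"
proof (induction "degree d" arbitrary: n d rule: less_induct)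
  case less
  show ?case
  proof (cases "poly d z = 0")
    case False then show ?thesis using less.prems by blast
  next
    case True
    have "ordz z d > 0" using ordz_pos[OF less.prems(3) True] .
    then have "ordz z n > 0" using less.prems(5) by simp
    then have nz: "poly n z = 0" using ordz_0[of n z] by (cases "poly n z = 0") auto
    let ?P = "\<lambda>p. p \<noteq> 0 \<and> polyC C p \<and> poly p z = 0"
    have "?P d" using less.prems True by simp
    then obtain p where pP: "?P p" and pmin: "\<And>p'. ?P p' \<Longrightarrow> degree p \<le> degree p'"
      using ex_has_least_nat[of ?P d degree] by blast
    obtain s where s: "polyC C s" "d = p * s"
      using min_root_dvd[of p] pP pmin less.prems True by blast
    obtain s' where s': "polyC C s'" "n = p * s'"
      using min_root_dvd[of p] pP pmin less.prems nz by blast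
    have s0: "s \<noteq> 0" "s' \<noteq> 0" using s s' less.prems by auto
    have dp: "degree p > 0"
    proof (rule ccontr)
      assume "\<not> degree p > 0"
      then obtain c where "p = [:c:]" using degree_eq_zeroE by blast
      then show False using pP by auto
    qed
    have "degree d = degree p + degree s" using s pP s0 by (simp add: degree_mult_eq)
    then have lt: "degree s < degree d" using dp by simp
    have "ordz z d = ordz z p + ordz z s" using s pP s0 by (simp add: ordz_mult)
    moreover have "ordz z n = ordz z p + ordz z s'" using s' pP s0 by (simp add: ordz_mult)
    ultimately have "ordz z s \<le> ordz z s'" using less.prems(5) by simp
    from less.hyps[OF lt s'(1) s(1) s0(1) s0(2) this]
    obtain n' d' where nd: "polyC C n'" "polyC C d'" "poly d' z \<noteq> 0" "Fract s' s = Fract n' d'" by blast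
    have "Fract n d = Fract s' s" using s s' s0 pP by (simp add: eq_fract)
    then show ?thesis using nd by metis
  qed
qed


lemma local_of_nu:
  assumes f: "ratfunC C f" and v: "nu_q (rev_at f z) \<ge> 0"
  shows "local_ratfun C z f"
proof -
  obtain n d where nd: "polyC C n" "polyC C d" "d \<noteq> 0" "f = Fract n d"
    using f unfolding ratfunC_def by blast
  show ?thesis
  proof (cases "n = 0")
    case True
    then have "f = Fract 0 1" using nd by (simp add: eq_fract)
    then show ?thesis unfolding local_ratfun_def using pC0 pC1 by (intro exI[of _ 0] exI[of _ 1]) auto
  next
    case False
    have "rev_at f z = pev n z / pev d z" using nd by (simp add: rev_at_Fract)
    then have "nu_q (rev_at f z) = ereal (of_nat (ordz z n)) - ereal (of_nat (ordz z d))"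
      using nd False pev_nz[of d z] nu_divide[of "pev d z" "pev n z"] nu_pev[of n z] nu_pev[of d z] by simp
    then have "ordz z d \<le> ordz z n" using v by simp
    from LR[OF nd(1,2,3) False this] show ?thesis unfolding local_ratfun_def using nd(4) by blast
  qed
qed

end


primrec Wup :: "(int \<Rightarrow> nat \<Rightarrow> 'b::field) \<Rightarrow> nat \<Rightarrow> (nat \<Rightarrow> 'b) \<Rightarrow> nat \<Rightarrow> nat \<Rightarrow> 'b" where
  "Wup c r w 0 = w"
| "Wup c r w (Suc k) = (\<lambda>i. if Suc i < r then Wup c r w k (Suc i)
      else - (\<Sum>j<r. c (int k) j * Wup c r w k j) / c (int k) r)"

primrec Wdn :: "(int \<Rightarrow> nat \<Rightarrow> 'b::field) \<Rightarrow> nat \<Rightarrow> (nat \<Rightarrow> 'b) \<Rightarrow> nat \<Rightarrow> nat \<Rightarrow> 'b" where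
  "Wdn c r w 0 = w"
| "Wdn c r w (Suc m) = (\<lambda>i. if i = 0 then
      - (\<Sum>j\<in>{1..r}. c (- int m - 1) j * Wdn c r w m (j - 1)) / c (- int m - 1) 0
      else Wdn c r w m (i - 1))"

definition bsol :: "(int \<Rightarrow> nat \<Rightarrow> 'b::field) \<Rightarrow> nat \<Rightarrow> (nat \<Rightarrow> 'b) \<Rightarrow> int \<Rightarrow> 'b" where
  "bsol c r w n = (if n \<ge> 0 then Wup c r w (nat n) 0 else Wdn c r w (nat (- n)) 0)"

lemma Wup_shift: "i < r \<Longrightarrow> Wup c r w k i = Wup c r w (k + i) 0"
proof (induction i arbitrary: k)
  case 0 then show ?case by simp
next
  case (Suc i)
  have "Wup c r w k (Suc i) = Wup c r w (Suc k) i" using Suc.prems by simp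
  also have "\<dots> = Wup c r w (Suc k + i) 0" using Suc.IH[of "Suc k"] Suc.prems by simp
  finally show ?case by simp
qed

lemma Wdn_shift: "i < r \<Longrightarrow> Wdn c r w m i = (if i \<le> m then Wdn c r w (m - i) 0 else w (i - m))"
proof (induction m arbitrary: i)
  case 0 then show ?case by simp
next
  case (Suc m)
  show ?case
  proof (cases i)
    case 0 then show ?thesis by simp
  next
    case (Suc i')
    then have "Wdn c r w (Suc m) i = Wdn c r w m i'" by simp
    also have "\<dots> = (if i' \<le> m then Wdn c r w (m - i') 0 else w (i' - m))" using Suc.IH[of i'] Suc.prems Suc by simp
    finally show ?thesis using Suc by simp
  qed
qed

lemma bsol_up: "i < r \<Longrightarrow> bsol c r w (int k + int i) = Wup c r w k i"
proof -
  assume i: "i < r"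
  have "bsol c r w (int k + int i) = Wup c r w (k + i) 0" by (simp add: bsol_def nat_add_distrib)
  then show ?thesis using Wup_shift[OF i, of c w k] by simp
qed

lemma bsol_dn: assumes "i < r" shows "bsol c r w (- int m + int i) = Wdn c r w m i"
proof (cases "i \<le> m")
  case True
  show ?thesis
  proof (cases "m - i = 0")
    case True
    then have "i = m" using \<open>i \<le> m\<close> by simp
    then show ?thesis using Wdn_shift[of m r c w m] \<open>i < r\<close> by (simp add: bsol_def)
  next
    case False
    then have "- int m + int i = - int (m - i)" using \<open>i \<le> m\<close> by simp
    moreover have "nat (int (m - i)) = m - i" by simp
    ultimately show ?thesis using True False \<open>i < r\<close> Wdn_shift[of i r c w m] unfolding bsol_def
      by (simp del: of_nat_diff)
  qed
next
  case False
  then have e: "- int m + int i = int 0 + int (i - m)" by simp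
  have "bsol c r w (- int m + int i) = Wup c r w 0 (i - m)"
    unfolding e using \<open>i < r\<close> by (intro bsol_up) simp
  then show ?thesis using False \<open>i < r\<close> Wdn_shift[of i r c w m] by simp
qed

lemma bsol_init: "i < r \<Longrightarrow> bsol c r w (int i) = w i"
  using bsol_up[of i r c w 0] by simp

lemma bsol_sol:
  assumes r: "r > 0" and cr: "\<And>n. c n r \<noteq> 0" and c0: "\<And>n. c n 0 \<noteq> 0"
  shows "(\<Sum>i\<le>r. c n i * bsol c r w (n + int i)) = 0"
proof (cases "n \<ge> 0")
  case True
  define k where "k = nat n"
  have n: "n = int k" using True k_def by simp
  have "bsol c r w (n + int r) = bsol c r w (int (Suc k) + int (r - 1))"
    using r n by simp
  also have "\<dots> = Wup c r w (Suc k) (r - 1)" using r by (intro bsol_up) simp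
  also have "\<dots> = - (\<Sum>j<r. c n j * Wup c r w k j) / c n r" using r n by simp
  finally have e1: "bsol c r w (n + int r) = - (\<Sum>j<r. c n j * Wup c r w k j) / c n r" .
  have e2: "(\<Sum>i<r. c n i * bsol c r w (n + int i)) = (\<Sum>j<r. c n j * Wup c r w k j)"
    by (rule sum.cong) (auto simp: n bsol_up)
  have "(\<Sum>i\<le>r. c n i * bsol c r w (n + int i)) = (\<Sum>i<r. c n i * bsol c r w (n + int i)) + c n r * bsol c r w (n + int r)"
    by (simp add: lessThan_Suc_atMost[symmetric])
  also have "\<dots> = 0" using e1 e2 cr[of n] by simp
  finally show ?thesis .
next
  case False
  define m where "m = nat (- n) - 1"
  have n: "n = - int m - 1" using False m_def by simp
  have e1: "bsol c r w n = - (\<Sum>j\<in>{1..r}. c n j * Wdn c r w m (j - 1)) / c n 0"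
  proof -
    have "bsol c r w n = Wdn c r w (Suc m) 0" proof -
      have "nat (- n) = Suc m" using n by simp
      then show ?thesis using False unfolding bsol_def by (simp del: Wdn.simps)
    qed
    moreover have "Wdn c r w (Suc m) 0 = - (\<Sum>j\<in>{1..r}. c n j * Wdn c r w m (j - 1)) / c n 0"
      unfolding n by (simp only: Wdn.simps if_True refl simp_thms)
    ultimately show ?thesis by simp
  qed
  have e2: "(\<Sum>j\<in>{1..r}. c n j * bsol c r w (n + int j)) = (\<Sum>j\<in>{1..r}. c n j * Wdn c r w m (j - 1))"
  proof (rule sum.cong)
    fix j assume j: "j \<in> {1..r}"
    then have "n + int j = - int m + int (j - 1)" using n by simp
    moreover have "j - 1 < r" using j by auto
    ultimately show "c n j * bsol c r w (n + int j) = c n j * Wdn c r w m (j - 1)"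
      using bsol_dn[of "j - 1" r c w m] by simp
  qed simp
  have "{..r} = insert 0 {1..r}" by auto
  then have "(\<Sum>i\<le>r. c n i * bsol c r w (n + int i)) = c n 0 * bsol c r w n + (\<Sum>j\<in>{1..r}. c n j * bsol c r w (n + int j))"
    by simp
  also have "\<dots> = 0" using e1 e2 c0[of n] by simp
  finally show ?thesis .
qed


lemma ereal_add_nonneg_gt: "0 \<le> (a::ereal) \<Longrightarrow> v < x \<Longrightarrow> v < a + x"
  by (cases a; cases x; cases v) auto

lemma ereal_add_nonneg_ge: "0 \<le> (a::ereal) \<Longrightarrow> v \<le> x \<Longrightarrow> v \<le> a + x"
  by (cases a; cases x; cases v) auto

lemma dn_nonneg:
  fixes c :: "int \<Rightarrow> nat \<Rightarrow> 'a::field fls"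
  assumes cpos: "\<And>n j. nu_q (c n j) \<ge> 0" and c0: "\<And>n. n < 0 \<Longrightarrow> nu_q (c n 0) = 0"
    and w: "\<And>i. i < r \<Longrightarrow> nu_q (w i) \<ge> 0"
  shows "i < r \<Longrightarrow> nu_q (Wdn c r w m i) \<ge> 0"
proof (induction m arbitrary: i)
  case 0 then show ?case using w by simp
next
  case (Suc m)
  show ?case
  proof (cases "i = 0")
    case False then show ?thesis using Suc by simp
  next
    case True
    let ?n = "- int m - 1"
    have cn: "nu_q (c ?n 0) = 0" using c0 by simp
    then have cnz: "c ?n 0 \<noteq> 0" by (auto simp: nu_q_def)
    have "nu_q (\<Sum>j\<in>{1..r}. c ?n j * Wdn c r w m (j - 1)) \<ge> 0"
    proof (rule nu_sum_ge)
      fix j assume "j \<in> {1..r}"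
      then have "j - 1 < r" by auto
      then show "nu_q (c ?n j * Wdn c r w m (j - 1)) \<ge> 0"
        using Suc.IH cpos by (simp add: nu_mult ereal_add_nonneg_ge)
    qed simp
    then show ?thesis using True cn cnz by (simp add: nu_divide)
  qed
qed

lemma up_gt:
  fixes c :: "int \<Rightarrow> nat \<Rightarrow> 'a::field fls"
  assumes sol: "(\<Sum>i\<le>r. c k i * b (k + int i)) = 0" and r: "r > 0"
    and cr: "nu_q (c k r) = 0" and cpos: "\<And>j. nu_q (c k j) \<ge> 0"
    and gt: "\<And>i. i < r \<Longrightarrow> nu_q (b (k + int i)) > v"
  shows "nu_q (b (k + int r)) > v"
proof -
  have "(\<Sum>i\<le>r. c k i * b (k + int i)) = (\<Sum>i<r. c k i * b (k + int i)) + c k r * b (k + int r)"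
    by (simp add: lessThan_Suc_atMost[symmetric])
  then have e: "c k r * b (k + int r) = - (\<Sum>i<r. c k i * b (k + int i))" using sol
    by (simp add: eq_neg_iff_add_eq_0 add.commute)
  have "nu_q (\<Sum>i<r. c k i * b (k + int i)) > v"
    using r by (intro nu_sum_gt) (auto simp: nu_mult intro!: ereal_add_nonneg_gt cpos gt)
  then have "nu_q (c k r * b (k + int r)) > v" unfolding e by simp
  then show ?thesis using cr by (simp add: nu_mult)
qed



lemma S_pow_sum: "(\<Sum>j<r. c j * S_pow j i) = (if i < r then c i else (0::'a::field poly fract))"
proof -
  have "(\<Sum>j<r. c j * S_pow j i) = (\<Sum>j<r. if i = j then c j else 0)"
    by (rule sum.cong) (auto simp: S_pow_def)
  then show ?thesis by simp
qed

lemma act_S_pow: "j < r \<Longrightarrow> act_at r (S_pow j) z b = b (int j)"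
proof -
  assume j: "j < r"
  have "act_at r (S_pow j) z b = (\<Sum>i<r. if i = j then b (int i) else 0)"
    unfolding act_at_def by (rule sum.cong) (auto simp: S_pow_def)
  then show ?thesis using j by simp
qed

lemma ediff_nonneg: "L \<le> v \<Longrightarrow> 0 \<le> ediff v L"
  unfolding ediff_def by (cases v; cases L) auto

lemma ediff_nonneg_imp: "0 \<le> ediff v L \<Longrightarrow> 0 \<le> L \<Longrightarrow> 0 \<le> v"
  unfolding ediff_def by (cases v; cases L) (auto split: if_splits)

lemma liminf_le_freq:
  fixes f :: "nat \<Rightarrow> ereal"
  assumes "\<And>N. \<exists>n\<ge>N. f n \<le> v"
  shows "liminf f \<le> v"
  unfolding liminf_SUP_INF
proof (rule SUP_least)
  fix N
  obtain n where "n \<ge> N" "f n \<le> v" using assms by blast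
  then show "(INF m\<in>{N..}. f m) \<le> v" by (intro INF_lower2[of n]) auto
qed

lemma liminf_ge0:
  fixes f :: "nat \<Rightarrow> ereal"
  assumes "\<And>n. f n \<ge> 0"
  shows "liminf f \<ge> 0"
  unfolding liminf_SUP_INF
  by (rule SUP_upper2[of 0]) (auto intro: INF_greatest assms)

context
  fixes C :: "'a::field_char_0 set" and l :: "nat \<Rightarrow> 'a poly" and r :: nat and \<beta> :: 'a
  assumes sf: "is_subfield C"
    and l0: "l 0 \<noteq> 0" and lr: "l r \<noteq> 0"
    and good: "\<And>n::int. n < 0 \<Longrightarrow> poly (l 0) (\<beta> + of_int n) \<noteq> 0 \<and> poly (l r) (\<beta> + of_int n) \<noteq> 0"
begin

definition cc :: "int \<Rightarrow> nat \<Rightarrow> 'a fls" where "cc n i = pev (l i) (\<beta> + of_int n)"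

lemma sol_iff: "is_sol l r \<beta> b \<longleftrightarrow> (\<forall>n. (\<Sum>i\<le>r. cc n i * b (n + int i)) = 0)"
  by (simp add: is_sol_def cc_def)

lemma cc_pos: "nu_q (cc n j) \<ge> 0"
proof (cases "l j = 0")
  case True then show ?thesis by (simp add: cc_def nu_q_def)
next
  case False then show ?thesis by (simp add: cc_def nu_pev)
qed

lemma cc0: "n < 0 \<Longrightarrow> nu_q (cc n 0) = 0"
  using good[of n] l0 by (simp add: cc_def nu_pev ordz_0)

lemma ccr: "n < 0 \<Longrightarrow> nu_q (cc n r) = 0"
  using good[of n] lr by (simp add: cc_def nu_pev ordz_0)

lemma window_le:
  assumes sol: "is_sol l r \<beta> b" and j: "j < r"
  shows "\<exists>i<r. nu_q (b (- int m + int i)) \<le> nu_q (b (int j))"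
proof (induction m)
  case 0 then show ?case using j by auto
next
  case (Suc m)
  let ?v = "nu_q (b (int j))"
  show ?case
  proof (rule ccontr)
    assume "\<not> ?thesis"
    then have gt: "\<And>i. i < r \<Longrightarrow> nu_q (b (- int (Suc m) + int i)) > ?v" by (auto simp: not_le)
    have up: "nu_q (b (- int (Suc m) + int r)) > ?v"
      by (rule up_gt[where c=cc and k="- int (Suc m)" and b=b]) (use sol j gt in \<open>auto simp: sol_iff ccr cc_pos\<close>)
    have "\<forall>i<r. nu_q (b (- int m + int i)) > ?v"
    proof (intro allI impI)
      fix i assume i: "i < r"
      show "nu_q (b (- int m + int i)) > ?v"
      proof (cases "Suc i < r")
        case True
        have "- int m + int i = - int (Suc m) + int (Suc i)" by simp
        then show ?thesis using gt[OF True] by simp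
      next
        case False
        then have "i = r - 1" using i by simp
        then have "- int m + int i = - int (Suc m) + int r" using i by simp
        then show ?thesis using up by (simp only:)
      qed
    qed
    then show False using Suc.IH by (auto simp: not_le)
  qed
qed

lemma S_pow_integral:
  assumes j: "j < r"
  shows "S_pow j \<in> integral_elems C l r \<beta>"
proof -
  have "ratfunC C 1"
    using pC1[OF sf] unfolding ratfunC_def
    by (intro exI[of _ 1] exI[of _ 1]) (simp add: One_fract_def)
  moreover have "ratfunC C 0"
    using pC0[OF sf] pC1[OF sf] unfolding ratfunC_def
    by (intro exI[of _ 0] exI[of _ 1]) (simp add: Zero_fract_def)
  ultimately
  have A: "A_elem C r (S_pow j)" using j by (auto simp: A_elem_def S_pow_def)
  have "val_at l r \<beta> (S_pow j) \<ge> 0"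
    unfolding val_at_def
  proof (rule INF_greatest)
    fix b assume "b \<in> {b. is_sol l r \<beta> b}"
    then have sol: "is_sol l r \<beta> b" by simp
    let ?v = "nu_q (b (int j))"
    have L: "liminf (\<lambda>n::nat. nu_q (b (- int n))) \<le> ?v"
    proof (rule liminf_le_freq)
      fix N
      obtain i where i: "i < r" "nu_q (b (- int (N + r - 1) + int i)) \<le> ?v"
        using window_le[OF sol j, of "N + r - 1"] by blast
      have eq: "- int (N + r - 1) + int i = - int (N + r - 1 - i)" using i j by simp
      have "nu_q (b (- int (N + r - 1 - i))) \<le> ?v" using i(2) unfolding eq .
      moreover have "N \<le> N + r - 1 - i" using i by simp
      ultimately show "\<exists>n\<ge>N. nu_q (b (- int n)) \<le> ?v" by blast
    qed
    show "0 \<le> ediff (nu_q (act_at r (S_pow j) \<beta> b)) (liminf (\<lambda>n::nat. nu_q (b (- int n))))"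
      unfolding act_S_pow[OF j] using L by (rule ediff_nonneg)
  qed
  then show ?thesis using A by (simp add: integral_elems_def)
qed

lemma integral_local:
  assumes f: "f \<in> integral_elems C l r \<beta>" and j: "j < r"
  shows "local_ratfun C \<beta> (f j)"
proof -
  have A: "A_elem C r f" and V: "val_at l r \<beta> f \<ge> 0" using f by (auto simp: integral_elems_def)
  define w where "w = (\<lambda>i::nat. if i = j then (1::'a fls) else 0)"
  define b where "b = bsol cc r w"
  have r: "r > 0" using j by simp
  have ccnz: "\<And>n. cc n r \<noteq> 0" "\<And>n. cc n 0 \<noteq> 0" using lr l0 by (auto simp: cc_def pev_nz)
  have sol: "is_sol l r \<beta> b" unfolding sol_iff b_def
    using bsol_sol[of r cc, OF r ccnz(1) ccnz(2)] by blast
  have wnn: "\<And>i. i < r \<Longrightarrow> nu_q (w i) \<ge> 0" by (auto simp: w_def nu_q_def)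
  have bnn: "\<And>n::nat. nu_q (b (- int n)) \<ge> 0"
  proof -
    fix n :: nat
    have "b (- int n) = Wdn cc r w n 0" unfolding b_def using bsol_dn[OF r, of cc w n] by simp
    moreover have "nu_q (Wdn cc r w n 0) \<ge> 0" by (rule dn_nonneg) (use cc_pos cc0 wnn r in auto)
    ultimately show "nu_q (b (- int n)) \<ge> 0" by simp
  qed
  have Lnn: "liminf (\<lambda>n::nat. nu_q (b (- int n))) \<ge> 0" by (rule liminf_ge0) (rule bnn)
  have act: "act_at r f \<beta> b = rev_at (f j) \<beta>"
  proof -
    have "act_at r f \<beta> b = (\<Sum>i<r. if i = j then rev_at (f i) \<beta> else 0)"
      unfolding act_at_def
    proof (rule sum.cong)
      fix i assume "i \<in> {..<r}"
      then have "b (int i) = w i" unfolding b_def by (simp add: bsol_init)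
      then show "rev_at (f i) \<beta> * b (int i) = (if i = j then rev_at (f i) \<beta> else 0)" by (simp add: w_def)
    qed simp
    then show ?thesis using j by simp
  qed
  have "0 \<le> ediff (nu_q (act_at r f \<beta> b)) (liminf (\<lambda>n::nat. nu_q (b (- int n))))"
  proof -
    have "val_at l r \<beta> f \<le> ediff (nu_q (act_at r f \<beta> b)) (liminf (\<lambda>n::nat. nu_q (b (- int n))))"
      unfolding val_at_def using sol by (intro INF_lower) simp
    then show ?thesis using V by simp
  qed
  then have "nu_q (rev_at (f j) \<beta>) \<ge> 0" unfolding act using Lnn by (rule ediff_nonneg_imp)
  moreover have "ratfunC C (f j)" using A by (simp add: A_elem_def)
  ultimately show ?thesis using local_of_nu[OF sf] by blast
qed

lemma basis: "local_integral_basis C l r \<beta> S_pow r"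
  unfolding local_integral_basis_def
proof (intro conjI allI impI ballI)
  fix j assume "j < r" then show "S_pow j \<in> integral_elems C l r \<beta>" by (rule S_pow_integral)
next
  fix f assume f: "f \<in> integral_elems C l r \<beta>"
  have fr: "\<And>i. i \<ge> r \<Longrightarrow> f i = 0" using f by (auto simp: integral_elems_def A_elem_def)
  let ?c = "\<lambda>j. if j < r then f j else 0"
  show "\<exists>!c. (\<forall>j<r. local_ratfun C \<beta> (c j)) \<and> (\<forall>j\<ge>r. c j = 0) \<and> f = (\<lambda>i. \<Sum>j<r. c j * S_pow j i)"
  proof (rule ex1I[of _ ?c])
    show "(\<forall>j<r. local_ratfun C \<beta> (?c j)) \<and> (\<forall>j\<ge>r. ?c j = 0) \<and> f = (\<lambda>i. \<Sum>j<r. ?c j * S_pow j i)"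
      using integral_local[OF f] fr by (auto simp: S_pow_sum)
  next
    fix c assume c: "(\<forall>j<r. local_ratfun C \<beta> (c j)) \<and> (\<forall>j\<ge>r. c j = 0) \<and> f = (\<lambda>i. \<Sum>j<r. c j * S_pow j i)"
    show "c = ?c"
    proof
      fix i show "c i = ?c i" using c by (auto simp: S_pow_sum)
    qed
  qed
qed

end


theorem mainTheorem1:
  fixes C :: "'a::field_char_0 set" and l :: "nat \<Rightarrow> 'a poly" and r :: nat
    and \<alpha> \<zeta> :: 'a
  assumes "is_subfield C"
    and "alg_closed_type TYPE('a)"
    and "algebraic_over C"
    and "\<forall>i\<le>r. polyC C (l i)"
    and "l 0 \<noteq> 0" and "l r \<noteq> 0"
    and "\<exists>k::int. \<zeta> = \<alpha> + of_int k"
    and "\<forall>\<eta>\<in>{\<eta>. (\<exists>k::int. \<eta> = \<alpha> + of_int k) \<and> shift_less \<eta> \<zeta>}. poly (l 0 * l r) \<eta> \<noteq> 0"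
  shows "\<forall>\<beta>\<in>{\<eta>. (\<exists>k::int. \<eta> = \<alpha> + of_int k) \<and> shift_less \<eta> \<zeta>} \<union> {\<zeta>}.
           local_integral_basis C l r \<beta> S_pow r"
proof
  fix \<beta> assume b: "\<beta> \<in> {\<eta>. (\<exists>k::int. \<eta> = \<alpha> + of_int k) \<and> shift_less \<eta> \<zeta>} \<union> {\<zeta>}"
  obtain k :: int where k: "\<beta> = \<alpha> + of_int k" using b assms(7) by blast
  obtain m0 :: nat where m0: "\<beta> - \<zeta> = - of_nat m0"
    using b unfolding shift_less_def by auto
  have good: "poly (l 0) (\<beta> + of_int n) \<noteq> 0 \<and> poly (l r) (\<beta> + of_int n) \<noteq> 0" if n: "n < 0" for n :: int
  proof -
    have "\<beta> + of_int n \<in> {\<eta>. (\<exists>k::int. \<eta> = \<alpha> + of_int k) \<and> shift_less \<eta> \<zeta>}"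
    proof (intro CollectI conjI)
      show "\<exists>k'::int. \<beta> + of_int n = \<alpha> + of_int k'" using k by (intro exI[of _ "k + n"]) simp
      have e1: "(of_nat (nat (- n)) :: 'a) = of_int (- n)" using n by (intro of_nat_nat) simp
      have "\<beta> + of_int n - \<zeta> = (\<beta> - \<zeta>) - of_int (- n)" by simp
      also have "\<dots> = - of_nat m0 - of_nat (nat (- n))" using m0 e1 by simp
      also have "\<dots> = - of_nat (m0 + nat (- n))" by simp
      finally have "\<beta> + of_int n - \<zeta> = - of_nat (m0 + nat (- n))" .
      then show "shift_less (\<beta> + of_int n) \<zeta>" unfolding shift_less_def using n
        by (intro exI[of _ "m0 + nat (- n)"]) simp
    qed
    then show ?thesis using assms(8) by auto
  qed
  show "local_integral_basis C l r \<beta> S_pow r"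
    by (rule basis[OF assms(1,5,6)]) (use good in auto)
qed


end
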